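(* There exist Archimedean vector lattices $X,Y$ and a disjointness preserving linear operator $T:X\to Y$ that does not satisfy condition $(\beta)$.
   Context: For a subset $A$ of a vector lattice $X$, $A^d=\{x\in X: |x|\wedge|a|=0 \text{ for all } a\in A\}$ and $A^{dd}=(A^d)^d$. For $a,b\in X$ we write $a\lhd b$ if $\{a\}^{dd}\subseteq\{b\}^{dd}$. A linear operator $T:X\to Y$ satisfies condition $(\beta)$ if $Ta\lhd Tb$ in $Y$ whenever $a\lhd b$ in $X$. A linear operator is disjointness preserving if it maps disjoint elements to disjoint elements. *)

theory Defs
  imports Main "HOL.Real"
begin

record 'a vlat =
  carrier :: "'a set"
  add :: "'a \<Rightarrow> 'a \<Rightarrow> 'a"
  zero :: 'a
  smult :: "real \<Rightarrow> 'a \<Rightarrow> 'a"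
  le :: "'a \<Rightarrow> 'a \<Rightarrow> bool"

definition vector_lattice :: "('a, 'b) vlat_scheme \<Rightarrow> bool" where
  "vector_lattice V \<longleftrightarrow>
     \<comment> \<open>real vector space\<close>
     zero V \<in> carrier V \<and>
     (\<forall>x\<in>carrier V. \<forall>y\<in>carrier V. add V x y \<in> carrier V) \<and>
     (\<forall>c. \<forall>x\<in>carrier V. smult V c x \<in> carrier V) \<and>
     (\<forall>x\<in>carrier V. \<forall>y\<in>carrier V. \<forall>z\<in>carrier V. add V (add V x y) z = add V x (add V y z)) \<and>
     (\<forall>x\<in>carrier V. \<forall>y\<in>carrier V. add V x y = add V y x) \<and>
     (\<forall>x\<in>carrier V. add V x (zero V) = x) \<and>
     (\<forall>x\<in>carrier V. \<exists>y\<in>carrier V. add V x y = zero V) \<and>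
     (\<forall>a b. \<forall>x\<in>carrier V. smult V a (smult V b x) = smult V (a * b) x) \<and>
     (\<forall>x\<in>carrier V. smult V 1 x = x) \<and>
     (\<forall>a b. \<forall>x\<in>carrier V. smult V (a + b) x = add V (smult V a x) (smult V b x)) \<and>
     (\<forall>a. \<forall>x\<in>carrier V. \<forall>y\<in>carrier V. smult V a (add V x y) = add V (smult V a x) (smult V a y)) \<and>
     \<comment> \<open>partial order\<close>
     (\<forall>x\<in>carrier V. le V x x) \<and>
     (\<forall>x\<in>carrier V. \<forall>y\<in>carrier V. le V x y \<and> le V y x \<longrightarrow> x = y) \<and>
     (\<forall>x\<in>carrier V. \<forall>y\<in>carrier V. \<forall>z\<in>carrier V. le V x y \<and> le V y z \<longrightarrow> le V x z) \<and>
     \<comment> \<open>compatibility with the vector structure\<close>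
     (\<forall>x\<in>carrier V. \<forall>y\<in>carrier V. \<forall>z\<in>carrier V. le V x y \<longrightarrow> le V (add V x z) (add V y z)) \<and>
     (\<forall>c. \<forall>x\<in>carrier V. \<forall>y\<in>carrier V. c \<ge> 0 \<and> le V x y \<longrightarrow> le V (smult V c x) (smult V c y)) \<and>
     \<comment> \<open>lattice: every pair has a supremum and an infimum\<close>
     (\<forall>x\<in>carrier V. \<forall>y\<in>carrier V. \<exists>s\<in>carrier V. le V x s \<and> le V y s \<and>
        (\<forall>z\<in>carrier V. le V x z \<and> le V y z \<longrightarrow> le V s z)) \<and>
     (\<forall>x\<in>carrier V. \<forall>y\<in>carrier V. \<exists>s\<in>carrier V. le V s x \<and> le V s y \<and>
        (\<forall>z\<in>carrier V. le V z x \<and> le V z y \<longrightarrow> le V z s))"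

definition vsup :: "('a, 'b) vlat_scheme \<Rightarrow> 'a \<Rightarrow> 'a \<Rightarrow> 'a" where
  "vsup V x y = (THE s. s \<in> carrier V \<and> le V x s \<and> le V y s \<and>
      (\<forall>z\<in>carrier V. le V x z \<and> le V y z \<longrightarrow> le V s z))"

definition vinf :: "('a, 'b) vlat_scheme \<Rightarrow> 'a \<Rightarrow> 'a \<Rightarrow> 'a" where
  "vinf V x y = (THE s. s \<in> carrier V \<and> le V s x \<and> le V s y \<and>
      (\<forall>z\<in>carrier V. le V z x \<and> le V z y \<longrightarrow> le V z s))"

definition vabs :: "('a, 'b) vlat_scheme \<Rightarrow> 'a \<Rightarrow> 'a" where
  "vabs V x = vsup V x (smult V (-1) x)"

definition vdisjoint :: "('a, 'b) vlat_scheme \<Rightarrow> 'a \<Rightarrow> 'a \<Rightarrow> bool" where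
  "vdisjoint V x y \<longleftrightarrow> vinf V (vabs V x) (vabs V y) = zero V"

definition dcompl :: "('a, 'b) vlat_scheme \<Rightarrow> 'a set \<Rightarrow> 'a set" where
  "dcompl V A = {x \<in> carrier V. \<forall>a\<in>A. vdisjoint V x a}"

definition vlhd :: "('a, 'b) vlat_scheme \<Rightarrow> 'a \<Rightarrow> 'a \<Rightarrow> bool" where
  "vlhd V a b \<longleftrightarrow> dcompl V (dcompl V {a}) \<subseteq> dcompl V (dcompl V {b})"

definition archimedean :: "('a, 'b) vlat_scheme \<Rightarrow> bool" where
  "archimedean V \<longleftrightarrow> (\<forall>x\<in>carrier V. \<forall>y\<in>carrier V.
      le V (zero V) x \<and> (\<forall>n::nat. le V (smult V (real n) x) y) \<longrightarrow> x = zero V)"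

definition linear_op :: "('a, 'b) vlat_scheme \<Rightarrow> ('c, 'd) vlat_scheme \<Rightarrow> ('a \<Rightarrow> 'c) \<Rightarrow> bool" where
  "linear_op X Y T \<longleftrightarrow>
     (\<forall>x\<in>carrier X. T x \<in> carrier Y) \<and>
     (\<forall>x\<in>carrier X. \<forall>y\<in>carrier X. T (add X x y) = add Y (T x) (T y)) \<and>
     (\<forall>c. \<forall>x\<in>carrier X. T (smult X c x) = smult Y c (T x))"

definition disjointness_preserving ::
    "('a, 'b) vlat_scheme \<Rightarrow> ('c, 'd) vlat_scheme \<Rightarrow> ('a \<Rightarrow> 'c) \<Rightarrow> bool" where
  "disjointness_preserving X Y T \<longleftrightarrow>
     (\<forall>x\<in>carrier X. \<forall>y\<in>carrier X. vdisjoint X x y \<longrightarrow> vdisjoint Y (T x) (T y))"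

definition condition_beta ::
    "('a, 'b) vlat_scheme \<Rightarrow> ('c, 'd) vlat_scheme \<Rightarrow> ('a \<Rightarrow> 'c) \<Rightarrow> bool" where
  "condition_beta X Y T \<longleftrightarrow>
     (\<forall>a\<in>carrier X. \<forall>b\<in>carrier X. vlhd X a b \<longrightarrow> vlhd Y (T a) (T b))"

end

theory Submission
  imports Defs Complex_Main
begin

definition pw :: "(real \<Rightarrow> real) set \<Rightarrow> (real \<Rightarrow> real) vlat" where
  "pw C = \<lparr>carrier = C, add = (\<lambda>f g t. f t + g t), zero = (\<lambda>t. 0),
     smult = (\<lambda>c f t. c * f t), le = (\<lambda>f g. \<forall>t. f t \<le> g t)\<rparr>"

lemma dsub: "dcompl V A \<subseteq> carrier V"
  by (auto simp: dcompl_def)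

lemma carrier_pw: "carrier (pw C) = C"
  by (simp add: pw_def)

locale pwc =
  fixes C :: "(real \<Rightarrow> real) set"
  assumes z: "(\<lambda>t. 0) \<in> C"
    and a: "\<And>f g. f \<in> C \<Longrightarrow> g \<in> C \<Longrightarrow> (\<lambda>t. f t + g t) \<in> C"
    and s: "\<And>f c. f \<in> C \<Longrightarrow> (\<lambda>t. c * f t) \<in> C"
    and mx: "\<And>f g. f \<in> C \<Longrightarrow> g \<in> C \<Longrightarrow> (\<lambda>t. max (f t) (g t)) \<in> C"
    and mn: "\<And>f g. f \<in> C \<Longrightarrow> g \<in> C \<Longrightarrow> (\<lambda>t. min (f t) (g t)) \<in> C"
begin

lemma minabs: "min \<bar>u\<bar> \<bar>v\<bar> = (0::real) \<longleftrightarrow> u = 0 \<or> v = 0"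
  by (cases "\<bar>u\<bar> \<le> \<bar>v\<bar>") (auto simp: min_def)

lemma vl: "vector_lattice (pw C)"
  unfolding vector_lattice_def pw_def
  apply (simp add: z a s algebra_simps)
  apply (intro conjI ballI)
  subgoal for x apply (rule bexI[of _ "\<lambda>t. -1 * x t"]) using s[of x "-1"] by auto
  subgoal by (auto simp: fun_eq_iff intro: order_antisym)
  subgoal by (meson order_trans)
  subgoal by (simp add: mult_left_mono)
  subgoal for x y apply (rule bexI[of _ "\<lambda>t. max (x t) (y t)"]) using mx by auto
  subgoal for x y apply (rule bexI[of _ "\<lambda>t. min (x t) (y t)"]) using mn by auto
  done

lemma arch: "archimedean (pw C)"
  unfolding archimedean_def pw_def
proof (simp only: vlat.simps, intro ballI impI, elim conjE)
  fix x y :: "real \<Rightarrow> real"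
  assume h0: "\<forall>t. 0 \<le> x t" and h: "\<forall>n. \<forall>t. real n * x t \<le> y t"
  show "x = (\<lambda>t. 0)"
  proof
    fix t
    show "x t = 0"
    proof (rule ccontr)
      assume "x t \<noteq> 0"
      then have p: "x t > 0" using h0[rule_format, of t] by linarith
      obtain n where "real n > y t / x t" using reals_Archimedean2 by blast
      then have "real n * x t > y t" using p by (simp add: pos_divide_less_eq)
      with h show False by (meson not_le)
    qed
  qed
qed

lemma vsup: "x \<in> C \<Longrightarrow> y \<in> C \<Longrightarrow> vsup (pw C) x y = (\<lambda>t. max (x t) (y t))"
  unfolding vsup_def
  apply (rule the_equality)
   apply (simp add: pw_def mx)
  apply (simp add: pw_def)
  apply (elim conjE)
  apply (rule ext)
  apply (rule order_antisym)
   apply (drule bspec[of _ _ "\<lambda>t. max (x t) (y t)"], simp add: mx, simp)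
  apply simp
  done

lemma vinf: "x \<in> C \<Longrightarrow> y \<in> C \<Longrightarrow> vinf (pw C) x y = (\<lambda>t. min (x t) (y t))"
  unfolding vinf_def
  apply (rule the_equality)
   apply (simp add: pw_def mn)
  apply (simp add: pw_def)
  apply (elim conjE)
  apply (rule ext)
  apply (rule order_antisym)
   apply simp
  apply (drule bspec[of _ _ "\<lambda>t. min (x t) (y t)"], simp add: mn, simp)
  done

lemma vabs: "x \<in> C \<Longrightarrow> vabs (pw C) x = (\<lambda>t. \<bar>x t\<bar>)"
  unfolding vabs_def
  apply (subst vsup)
  using s[of x "-1"] apply (auto simp: pw_def fun_eq_iff)
  done

lemma absC: "x \<in> C \<Longrightarrow> (\<lambda>t. \<bar>x t\<bar>) \<in> C"
proof -
  assume x: "x \<in> C"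
  have "(\<lambda>t. \<bar>x t\<bar>) = (\<lambda>t. max (x t) (-1 * x t))" by (auto simp: fun_eq_iff abs_if max_def)
  then show ?thesis using mx[OF x s[OF x, of "-1"]] by simp
qed

lemma vdis: "x \<in> C \<Longrightarrow> y \<in> C \<Longrightarrow> vdisjoint (pw C) x y \<longleftrightarrow> (\<forall>t. x t = 0 \<or> y t = 0)"
  unfolding vdisjoint_def
  apply (simp add: vabs vinf absC)
  apply (simp add: pw_def fun_eq_iff)
  using minabs by blast

lemma dcompl: "A \<subseteq> C \<Longrightarrow> dcompl (pw C) A = {x \<in> C. \<forall>a\<in>A. \<forall>t::real. x t = 0 \<or> a t = (0::real)}"
  unfolding dcompl_def
  apply (simp add: pw_def[of C])
  using vdis by (auto simp: pw_def)

end

definition CX :: "(real \<Rightarrow> real) set" where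
  "CX = {f. continuous_on {0..1} f \<and> (\<forall>t. t \<notin> {0..1} \<longrightarrow> f t = 0)}"

definition CY :: "(real \<Rightarrow> real) set" where
  "CY = range (\<lambda>c t. c)"

lemma pwX: "pwc CX"
  unfolding pwc_def CX_def
  apply (intro conjI allI impI)
  apply (simp_all add: continuous_on_const continuous_on_add continuous_on_mult_left
     continuous_on_max continuous_on_min)
  done

lemma pwY: "pwc CY"
  unfolding pwc_def CY_def
  by (auto simp: image_def)

lemma zero_at0:
  assumes "x \<in> CX" "\<forall>t\<in>{0<..1}. x t = 0"
  shows "x 0 = 0"
proof -
  have c: "continuous_on {0..1} x" using assms(1) by (simp add: CX_def)
  have "(0::real) \<in> {0..1}" by simp
  with c have l: "(x \<longlongrightarrow> x 0) (at 0 within {0..1})"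
    by (simp add: continuous_on_def)
  have ev: "eventually (\<lambda>t. x t = 0) (at 0 within {0..1})"
    unfolding eventually_at_filter using assms(2) by (simp add: eventually_True)
  have l2: "((\<lambda>t::real. 0::real) \<longlongrightarrow> x 0) (at 0 within {0..1})"
    apply (rule Lim_transform_eventually[OF l])
    using ev by simp
  have nb: "at (0::real) within {0..1} \<noteq> bot"
    by (simp add: at_within_Icc_at_right)
  have "0 = x 0" by (rule tendsto_unique[OF nb tendsto_const l2])
  then show ?thesis by simp
qed

theorem mainTheorem5:
  shows "\<exists>(X :: (real \<Rightarrow> real) vlat) (Y :: (real \<Rightarrow> real) vlat) T.
           vector_lattice X \<and> archimedean X \<and>
           vector_lattice Y \<and> archimedean Y \<and>
           linear_op X Y T \<and> disjointness_preserving X Y T \<and>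
           \<not> condition_beta X Y T"
proof (intro exI conjI)
  interpret X: pwc CX by (rule pwX)
  interpret Y: pwc CY by (rule pwY)
  let ?T = "\<lambda>(f::real\<Rightarrow>real) (t::real). f 0"
  show "vector_lattice (pw CX)" "archimedean (pw CX)"
       "vector_lattice (pw CY)" "archimedean (pw CY)"
    by (rule X.vl X.arch Y.vl Y.arch)+
  have TY: "\<And>f. ?T f \<in> CY" by (simp add: CY_def)
  show "linear_op (pw CX) (pw CY) ?T"
    unfolding linear_op_def using TY by (simp add: pw_def)
  show "disjointness_preserving (pw CX) (pw CY) ?T"
    unfolding disjointness_preserving_def
  proof (intro ballI impI)
    fix x y assume xy: "x \<in> carrier (pw CX)" "y \<in> carrier (pw CX)" "vdisjoint (pw CX) x y"
    then have "x \<in> CX" "y \<in> CX" by (auto simp: pw_def)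
    then show "vdisjoint (pw CY) (?T x) (?T y)" using xy(3) TY
      by (simp add: X.vdis Y.vdis)
  qed
  define a where "a = (\<lambda>t::real. if t \<in> {0..1} then 1 else (0::real))"
  define b where "b = (\<lambda>t::real. if t \<in> {0..1} then t else (0::real))"
  have ea: "\<And>t. t \<in> {0..1} \<Longrightarrow> a t = (\<lambda>t. 1) t" by (simp add: a_def)
  have eb: "\<And>t. t \<in> {0..1} \<Longrightarrow> b t = (\<lambda>t. t) t" by (simp add: b_def)
  have ca: "continuous_on {0..1} a"
    by (rule iffD2[OF continuous_on_cong[OF refl ea] continuous_on_const])
  have cb: "continuous_on {0..1} b"
    by (rule iffD2[OF continuous_on_cong[OF refl eb] continuous_on_id])
  have aX: "a \<in> CX" unfolding CX_def using ca by (simp add: a_def)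
  have bX: "b \<in> CX" unfolding CX_def using cb by (simp add: b_def)
  have "dcompl (pw CX) {b} = {\<lambda>t. 0}"
  proof -
    have main: "x = (\<lambda>t. 0)" if "x \<in> CX" "\<forall>t. x t = 0 \<or> b t = 0" for x
    proof -
      have h: "\<forall>t\<in>{0<..1}. x t = 0"
      proof
        fix t :: real assume t: "t \<in> {0<..1}"
        then have "b t \<noteq> 0" by (simp add: b_def)
        then show "x t = 0" using that(2) by blast
      qed
      have x0: "x 0 = 0" by (rule zero_at0[OF that(1) h])
      have out: "\<forall>t. t \<notin> {0..1} \<longrightarrow> x t = 0" using that(1) by (simp add: CX_def)
      show ?thesis
      proof
        fix t :: real
        show "x t = 0"
        proof (cases "t = 0")
          case True then show ?thesis using x0 by simp
        next
          case False
          show ?thesis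
          proof (cases "t \<in> {0<..1}")
            case True then show ?thesis using h by blast
          next
            case F2: False
            then have "t \<notin> {0..1}" using False by auto
            then show ?thesis using out by blast
          qed
        qed
      qed
    qed
    have eq: "dcompl (pw CX) {b} = {x \<in> CX. \<forall>a\<in>{b}. \<forall>t::real. x t = 0 \<or> a t = (0::real)}"
      by (rule X.dcompl) (simp add: bX)
    show ?thesis
    proof
      show "dcompl (pw CX) {b} \<subseteq> {\<lambda>t. 0}"
        unfolding eq using main by blast
      show "{\<lambda>t. 0} \<subseteq> dcompl (pw CX) {b}"
        unfolding eq using X.z by simp
    qed
  qed
  then have ddb: "dcompl (pw CX) (dcompl (pw CX) {b}) = CX"
  proof -
    assume e: "dcompl (pw CX) {b} = {\<lambda>t. 0}"
    have "dcompl (pw CX) {\<lambda>t. 0} = {x \<in> CX. \<forall>a\<in>{\<lambda>t. 0}. \<forall>t::real. x t = 0 \<or> a t = (0::real)}"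
      by (rule X.dcompl) (simp add: X.z)
    then show ?thesis unfolding e by simp
  qed
  have "vlhd (pw CX) a b"
    unfolding vlhd_def ddb using dsub[of "pw CX" "dcompl (pw CX) {a}"] by (simp add: carrier_pw)
  moreover have "\<not> vlhd (pw CY) (?T a) (?T b)"
  proof -
    have ta: "?T a = (\<lambda>t. 1)" and tb: "?T b = (\<lambda>t. 0)" by (simp_all add: a_def b_def)
    have one: "(\<lambda>t. 1::real) \<in> CY" by (simp add: CY_def)
    have zero: "(\<lambda>t. 0::real) \<in> CY" by (simp add: CY_def)
    have d1e: "dcompl (pw CY) {\<lambda>t. 1} = {x \<in> CY. \<forall>a\<in>{\<lambda>t. 1}. \<forall>t::real. x t = 0 \<or> a t = (0::real)}"
      by (rule Y.dcompl) (simp add: one)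
    have d1: "dcompl (pw CY) {\<lambda>t. 1} = {\<lambda>t. 0}"
      unfolding d1e using zero by (auto simp: fun_eq_iff)
    have d0e: "dcompl (pw CY) {\<lambda>t. 0} = {x \<in> CY. \<forall>a\<in>{\<lambda>t. 0}. \<forall>t::real. x t = 0 \<or> a t = (0::real)}"
      by (rule Y.dcompl) (simp add: zero)
    have d0: "dcompl (pw CY) {\<lambda>t. 0} = CY"
      unfolding d0e by simp
    have dCe: "dcompl (pw CY) CY = {x \<in> CY. \<forall>a\<in>CY. \<forall>t::real. x t = 0 \<or> a t = (0::real)}"
      by (rule Y.dcompl) simp
    have "(\<lambda>t. 1::real) \<notin> dcompl (pw CY) CY"
      unfolding dCe using one by (metis (mono_tags, lifting) mem_Collect_eq zero_neq_one)
    then show ?thesis unfolding vlhd_def ta tb d1 d0 using one by blast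
  qed
  ultimately show "\<not> condition_beta (pw CX) (pw CY) ?T"
    unfolding condition_beta_def carrier_pw using aX bX by blast
qed

end
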